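(* Let $k\ge2$, $-\frac{\pi}{2}\le\theta_1<\dots<\theta_k\le\frac{\pi}{2}$ and $\hat\theta_1,\dots,\hat\theta_k\in[-\frac{\pi}{2},\frac{\pi}{2}]$, and let $\epsilon>0$. Assume $$\|\eta_{k,k}(\theta_1,\dots,\theta_k,\hat\theta_1,\dots,\hat\theta_k)\|_\infty<\epsilon\quad\text{and}\quad\theta_{\min}=\min_{q\ne j}|\theta_q-\theta_j|\ge\Big(\frac{4\epsilon}{\lambda(k)}\Big)^{1/k}.$$ Then after reordering the $\hat\theta_j$, for all $j=1,\dots,k$, $$|\hat\theta_j-\theta_j|<\frac{\theta_{\min}}{2}\quad\text{and}\quad|\hat\theta_j-\theta_j|\le\frac{2^{k-1}\epsilon}{(k-2)!\,\theta_{\min}^{k-1}}.$$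
   Context: For $z_1,\dots,z_p,\hat z_1,\dots,\hat z_q\in\mathbb C$, $\eta_{p,q}(z_1,\dots,z_p,\hat z_1,\dots,\hat z_q)\in\mathbb R^p$ is the vector whose $j$-th entry is $\prod_{l=1}^q|z_j-\hat z_l|$. For an integer $k\ge1$: $\xi(1)=\frac12$; $\xi(k)=\frac{(\frac{k-1}{2})!(\frac{k-3}{2})!}{4}$ if $k\ge3$ is odd; $\xi(k)=\frac{((\frac{k-2}{2})!)^2}{4}$ if $k$ is even. For $k\ge2$: $\lambda(2)=1$ and $\lambda(k)=\xi(k-2)$ for $k\ge3$. *)

theory Defs
  imports Complex_Main "HOL-Combinatorics.Permutations"
begin

definition eta :: "nat \<Rightarrow> nat \<Rightarrow> (nat \<Rightarrow> complex) \<Rightarrow> (nat \<Rightarrow> complex) \<Rightarrow> nat \<Rightarrow> real" where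
  "eta p q z zh j = (\<Prod>l=1..q. cmod (z j - zh l))"

definition infnorm_vec :: "nat \<Rightarrow> (nat \<Rightarrow> real) \<Rightarrow> real" where
  "infnorm_vec p v = Max ((\<lambda>j. \<bar>v j\<bar>) ` {1..p})"

definition xi :: "nat \<Rightarrow> real" where
  "xi k = (if k = 1 then 1/2
           else if odd k then fact ((k-1) div 2) * fact ((k-3) div 2) / 4
           else (fact ((k-2) div 2))^2 / 4)"

definition lam :: "nat \<Rightarrow> real" where
  "lam k = (if k = 2 then 1 else xi (k-2))"

definition theta_min :: "nat \<Rightarrow> (nat \<Rightarrow> real) \<Rightarrow> real" where
  "theta_min k \<theta> = Min {\<bar>\<theta> q - \<theta> j\<bar> | q j. q \<in> {1..k} \<and> j \<in> {1..k} \<and> q \<noteq> j}"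

end

theory Submission
  imports Defs "HOL-Computational_Algebra.Polynomial"
begin


lemma odd_prod_ge:
  "a + b = Suc n \<Longrightarrow> fact n \<le> (\<Prod>t=1..a. 2 * real t - 1) * (\<Prod>t=1..b. 2 * real t - 1)"
proof (induction n arbitrary: a b)
  case 0
  then have "(a = 1 \<and> b = 0) \<or> (a = 0 \<and> b = 1)" by auto
  then show ?case by auto
next
  case (Suc n)
  have key: "fact (Suc n) \<le> (\<Prod>t=1..a. 2 * real t - 1) * (\<Prod>t=1..b. 2 * real t - 1)"
    if ab: "a + b = Suc (Suc n)" "b \<le> a" for a b
  proof -
    have a1: "a \<ge> 1" using ab by auto
    have IH: "fact n \<le> (\<Prod>t=1..a-1. 2 * real t - 1) * (\<Prod>t=1..b. 2 * real t - 1)"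
      using Suc.IH[of "a-1" b] ab by auto
    have split: "(\<Prod>t=1..a. 2 * real t - 1) = (2 * real a - 1) * (\<Prod>t=1..a-1. 2 * real t - 1)"
    proof -
      have "{1..a} = insert a {1..a-1}" using a1 by auto
      moreover have "(\<Prod>t\<in>insert a {1..a-1}. 2 * real t - 1) = (2 * real a - 1) * (\<Prod>t=1..a-1. 2 * real t - 1)"
        by (rule prod.insert) auto
      ultimately show ?thesis by simp
    qed
    have nn: "0 \<le> (\<Prod>t=1..a-1. 2 * real t - 1) * (\<Prod>t=1..b. 2 * real t - 1)"
      by (intro mult_nonneg_nonneg prod_nonneg) auto
    have c: "real (Suc n) \<le> 2 * real a - 1" using ab by auto
    have "fact (Suc n) = real (Suc n) * fact n" by simp
    also have "\<dots> \<le> (2 * real a - 1) * ((\<Prod>t=1..a-1. 2 * real t - 1) * (\<Prod>t=1..b. 2 * real t - 1))"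
      by (rule mult_mono[OF c IH]) (use a1 nn in auto)
    finally show ?thesis by (simp only: split mult.assoc)
  qed
  show ?case
  proof (cases "b \<le> a")
    case True then show ?thesis using key Suc.prems by auto
  next
    case False then show ?thesis using key[of b a] Suc.prems by (simp add: mult.commute)
  qed
qed

lemma prod_dist_split:
  fixes g :: "nat \<Rightarrow> real"
  assumes "i \<in> {1..k}"
  shows "(\<Prod>m\<in>{1..k}-{i}. g (if m < i then i - m else m - i)) = (\<Prod>t=1..i-1. g t) * (\<Prod>t=1..k-i. g t)"
proof -
  have e: "{1..k}-{i} = {1..<i} \<union> {i<..k}" using assms by auto
  have "(\<Prod>m\<in>{1..k}-{i}. g (if m < i then i - m else m - i)) =
     (\<Prod>m\<in>{1..<i}. g (if m < i then i - m else m - i)) * (\<Prod>m\<in>{i<..k}. g (if m < i then i - m else m - i))"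
    unfolding e by (rule prod.union_disjoint) auto
  also have "(\<Prod>m\<in>{1..<i}. g (if m < i then i - m else m - i)) = (\<Prod>t=1..i-1. g t)"
    by (rule prod.reindex_bij_witness[of _ "\<lambda>t. i - t" "\<lambda>m. i - m"]) auto
  also have "(\<Prod>m\<in>{i<..k}. g (if m < i then i - m else m - i)) = (\<Prod>t=1..k-i. g t)"
    by (rule prod.reindex_bij_witness[of _ "\<lambda>t. i + t" "\<lambda>m. m - i"]) auto
  finally show ?thesis .
qed

lemma prod_real_fact: "(\<Prod>t=1..n. real t) = fact n"
  by (simp add: fact_prod)

lemma sum_inv_fact:
  assumes "k \<ge> 1"
  shows "(\<Sum>i=1..k. 1 / (fact (i-1) * fact (k-i) :: real)) = 2^(k-1) / fact (k-1)"
proof -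
  define n where "n = k - 1"
  have kn: "k = Suc n" using assms n_def by auto
  have "(\<Sum>i=1..k. 1 / (fact (i-1) * fact (k-i) :: real)) = (\<Sum>t\<le>n. 1 / (fact t * fact (n - t)))"
    by (rule sum.reindex_bij_witness[of _ "\<lambda>t. t + 1" "\<lambda>i. i - 1"]) (auto simp: kn)
  also have "\<dots> = (\<Sum>t\<le>n. real (n choose t) / fact n)"
    by (rule sum.cong) (auto simp: binomial_fact)
  also have "\<dots> = real (\<Sum>t\<le>n. n choose t) / fact n"
    by (simp add: sum_divide_distrib)
  also have "\<dots> = 2^n / fact n" by (simp add: choose_row_sum)
  finally show ?thesis by (simp add: n_def)
qed

lemma even_fact_ineq: "(fact a)^2 * 4^a \<le> (fact (2*a+3) :: real)"
proof (induction a)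
  case 0 then show ?case by (simp add: fact_numeral)
next
  case (Suc a)
  have "(fact (Suc a))^2 * 4^(Suc a) = (4 * real (Suc a)^2) * ((fact a)^2 * 4^a :: real)"
    by (simp add: power2_eq_square algebra_simps)
  also have "\<dots> \<le> (real (2*a+4) * real (2*a+5)) * fact (2*a+3)"
    by (rule mult_mono[OF _ Suc.IH]) (auto simp: power2_eq_square algebra_simps)
  also have "\<dots> = fact (2 * Suc a + 3)"
    by (simp add: algebra_simps numeral_eq_Suc)
  finally show ?case .
qed

lemma odd_fact_ineq: "fact (Suc b) * fact b * 2^(2*b+1) \<le> (fact (2*b+4) :: real)"
proof (induction b)
  case 0 then show ?case by (simp add: fact_numeral)
next
  case (Suc b)
  have "fact (Suc (Suc b)) * fact (Suc b) * 2^(2*Suc b+1) = (4 * real (Suc (Suc b)) * real (Suc b)) * (fact (Suc b) * fact b * 2^(2*b+1) :: real)"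
    by (simp add: algebra_simps)
  also have "\<dots> \<le> (real (2*b+5) * real (2*b+6)) * fact (2*b+4)"
    by (rule mult_mono[OF _ Suc.IH]) (auto simp: algebra_simps)
  also have "\<dots> = fact (2 * Suc b + 4)"
    by (simp add: algebra_simps numeral_eq_Suc)
  finally show ?case .
qed



lemma xi_bound: "n \<ge> 1 \<Longrightarrow> xi n * 2^n \<le> fact (n+1)"
proof -
  assume n1: "n \<ge> 1"
  consider "n = 1" | b where "n = 2*b+3" | a where "n = 2*a+2"
  proof -
    have "n = 1 \<or> (\<exists>b. n = 2*b+3) \<or> (\<exists>a. n = 2*a+2)" using n1 by presburger
    then show ?thesis using that by blast
  qed
  then show ?thesis
  proof cases
    case 1 then show ?thesis by (simp add: xi_def)
  next
    case (2 b)
    have o: "odd n" "n \<noteq> 1" "(n-1) div 2 = b+1" "(n-3) div 2 = b" using 2 by presburger+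
    have x: "xi n = fact (b+1) * fact b / 4"
      unfolding xi_def using o by simp
    have "xi n * 2^n = fact (Suc b) * fact b * 2^(2*b+1)"
      unfolding x by (simp add: 2 power_add)
    also have "\<dots> \<le> fact (2*b+4)" by (rule odd_fact_ineq)
    finally show ?thesis unfolding 2 by (simp add: numeral_eq_Suc)
  next
    case (3 a)
    have o: "\<not> odd n" "n \<noteq> 1" "(n-2) div 2 = a" using 3 by presburger+
    have x: "xi n = (fact a)^2 / 4"
      unfolding xi_def using o by simp
    have "xi n * 2^n = (fact a)^2 * 4^a"
      unfolding x by (simp add: 3 power_add power_mult)
    also have "\<dots> \<le> fact (2*a+3)" by (rule even_fact_ineq)
    finally show ?thesis unfolding 3 by (simp add: numeral_eq_Suc)
  qed
qed

lemma lam_bound: "k \<ge> 2 \<Longrightarrow> lam k * 2^k \<le> 4 * fact (k-1)"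
proof -
  assume k: "k \<ge> 2"
  show ?thesis
  proof (cases "k = 2")
    case True then show ?thesis by (simp add: lam_def)
  next
    case False
    define n where "n = k - 2"
    have n1: "n \<ge> 1" and kn: "k = n + 2" using k False n_def by auto
    have "lam k * 2^k = 4 * (xi n * 2^n)" using False unfolding lam_def kn by (simp add: power_add)
    also have "\<dots> \<le> 4 * fact (n+1)" using xi_bound[OF n1] by simp
    finally show ?thesis by (simp add: kn)
  qed
qed

lemma xi_pos: "xi n > 0"
  unfolding xi_def by auto

lemma lam_pos: "lam k > 0"
  unfolding lam_def using xi_pos by auto



lemma lagrange_id:
  fixes t h :: "nat \<Rightarrow> real" and S :: "nat set"
  assumes fin: "finite S" and ne: "S \<noteq> {}" and inj: "inj_on t S"
  shows "(\<Prod>l\<in>S. x - h l) = (\<Prod>m\<in>S. x - t m) +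
     (\<Sum>i\<in>S. (\<Prod>l\<in>S. t i - h l) * (\<Prod>m\<in>S-{i}. (x - t m) / (t i - t m)))"
proof -
  define c where "c i = (\<Prod>l\<in>S. t i - h l) / (\<Prod>m\<in>S-{i}. t i - t m)" for i
  define P where "P = (\<Prod>l\<in>S. [:- h l, 1:])"
  define W where "W = (\<Prod>m\<in>S. [:- t m, 1:])"
  define Q where "Q i = (\<Prod>m\<in>S-{i}. [:- t m, 1:])" for i
  define Lg where "Lg = (\<Sum>i\<in>S. smult (c i) (Q i))"
  have degP: "degree P = card S" unfolding P_def
    by (subst degree_prod_eq_sum_degree) auto
  have degW: "degree W = card S" unfolding W_def
    by (subst degree_prod_eq_sum_degree) auto
  have lcP: "lead_coeff P = 1" unfolding P_def by (simp add: lead_coeff_prod)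
  have lcW: "lead_coeff W = 1" unfolding W_def by (simp add: lead_coeff_prod)
  have degQ: "degree (Q i) = card S - 1" if "i \<in> S" for i unfolding Q_def
    by (subst degree_prod_eq_sum_degree) (use that fin in auto)
  have cS: "card S \<ge> 1" using fin ne by (simp add: Suc_le_eq card_gt_0_iff)
  have degLg: "degree Lg \<le> card S - 1" unfolding Lg_def
    by (rule degree_sum_le) (use fin degQ in \<open>auto intro: order.trans[OF degree_smult_le]\<close>)
  have cLg: "coeff Lg (card S) = 0"
    using degLg cS by (intro coeff_eq_0) auto
  have eq: "P = W + Lg"
  proof (rule poly_eqI_degree_lead_coeff[where n = "card S" and A = "t ` S"])
    show "coeff P (card S) = coeff (W + Lg) (card S)"
      using lcP lcW degP degW cLg by simp
    show "card S \<le> card (t ` S)" using card_image[OF inj] by simp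
    show "degree P \<le> card S" using degP by simp
    show "degree (W + Lg) \<le> card S"
      using degree_add_le[of W "card S" Lg] degW degLg by auto
    fix z assume "z \<in> t ` S"
    then obtain j where j: "j \<in> S" "z = t j" by auto
    have Wz: "poly W z = 0" unfolding W_def poly_prod using j fin
      by (intro prod_zero) auto
    have Qz: "poly (Q i) z = 0" if "i \<in> S" "i \<noteq> j" for i
      unfolding Q_def poly_prod using j fin that by (intro prod_zero) (auto intro!: bexI[of _ j])
    have nz: "(\<Prod>m\<in>S-{j}. t j - t m) \<noteq> 0"
      using inj j fin by (subst prod_zero_iff) (auto dest: inj_onD)
    have "poly Lg z = (\<Sum>i\<in>S. c i * poly (Q i) z)" unfolding Lg_def by (simp add: poly_sum)
    also have "\<dots> = c j * poly (Q j) z + (\<Sum>i\<in>S-{j}. c i * poly (Q i) z)"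
      using fin j by (simp add: sum.remove)
    also have "(\<Sum>i\<in>S-{j}. c i * poly (Q i) z) = 0"
      using Qz by (intro sum.neutral) auto
    also have "poly (Q j) z = (\<Prod>m\<in>S-{j}. t j - t m)"
      unfolding Q_def poly_prod j by simp
    also have "c j * (\<Prod>m\<in>S-{j}. t j - t m) = (\<Prod>l\<in>S. t j - h l)"
      unfolding c_def using nz by simp
    also have "(\<Prod>l\<in>S. t j - h l) = poly P z"
      unfolding P_def poly_prod j by simp
    finally show "poly P z = poly (W + Lg) z" using Wz by simp
  qed
  have "(\<Prod>l\<in>S. x - h l) = poly P x" unfolding P_def poly_prod by simp
  also have "\<dots> = poly W x + poly Lg x" using eq by simp
  also have "poly W x = (\<Prod>m\<in>S. x - t m)" unfolding W_def poly_prod by simp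
  also have "poly Lg x = (\<Sum>i\<in>S. (\<Prod>l\<in>S. t i - h l) * (\<Prod>m\<in>S-{i}. (x - t m) / (t i - t m)))"
    unfolding Lg_def poly_sum
  proof (rule sum.cong[OF refl])
    fix i assume "i \<in> S"
    show "poly (smult (c i) (Q i)) x = (\<Prod>l\<in>S. t i - h l) * (\<Prod>m\<in>S-{i}. (x - t m) / (t i - t m))"
      unfolding Q_def c_def poly_smult poly_prod by (simp add: prod_dividef)
  qed
  finally show ?thesis .
qed



definition dst :: "nat \<Rightarrow> nat \<Rightarrow> nat" where "dst i m = (if m < i then i - m else m - i)"

lemma prod_dist_fact:
  assumes "i \<in> {1..k}"
  shows "(\<Prod>m\<in>{1..k}-{i}. real (dst i m)) = fact (i-1) * fact (k-i)"
  using prod_dist_split[OF assms, of real] prod_real_fact[of "i-1"] prod_real_fact[of "k-i"]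
  unfolding dst_def by simp

lemma D_bound:
  fixes \<theta> :: "nat \<Rightarrow> real"
  assumes d: "d > 0" and i: "i \<in> {1..k}"
    and sep: "\<forall>i\<in>{1..k}. \<forall>m\<in>{1..k}. \<bar>\<theta> i - \<theta> m\<bar> \<ge> real (dst i m) * d"
  shows "(\<Prod>m\<in>{1..k}-{i}. \<bar>\<theta> i - \<theta> m\<bar>) \<ge> d^(k-1) * (fact (i-1) * fact (k-i))"
proof -
  have "(\<Prod>m\<in>{1..k}-{i}. \<bar>\<theta> i - \<theta> m\<bar>) \<ge> (\<Prod>m\<in>{1..k}-{i}. real (dst i m) * d)"
    using sep i d by (intro prod_mono) auto
  moreover have "(\<Prod>m\<in>{1..k}-{i}. real (dst i m) * d) = d^(k-1) * (fact (i-1) * fact (k-i))"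
  proof -
    have "(\<Prod>m\<in>{1..k}-{i}. real (dst i m) * d) = (\<Prod>m\<in>{1..k}-{i}. real (dst i m)) * (\<Prod>m\<in>{1..k}-{i}. d)"
      by (rule prod.distrib)
    also have "(\<Prod>m\<in>{1..k}-{i}. d) = d^(k-1)" using i by simp
    finally show ?thesis using prod_dist_fact[OF i] by simp
  qed
  ultimately show ?thesis by simp
qed

lemma L_bound:
  fixes \<theta> c :: "nat \<Rightarrow> real"
  assumes k: "k \<ge> 2" and d: "d > 0"
    and sep: "\<forall>i\<in>{1..k}. \<forall>m\<in>{1..k}. \<bar>\<theta> i - \<theta> m\<bar> \<ge> real (dst i m) * d"
    and x: "\<forall>m\<in>{1..k}. \<bar>x - \<theta> m\<bar> \<ge> d/2"
    and c: "\<forall>i\<in>{1..k}. \<bar>c i\<bar> < \<epsilon>"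
    and e: "\<epsilon> * 2^k \<le> fact (k-1) * d^k"
  shows "\<bar>\<Sum>i\<in>{1..k}. c i * (\<Prod>m\<in>{1..k}-{i}. (x - \<theta> m)/(\<theta> i - \<theta> m))\<bar> < \<bar>\<Prod>m\<in>{1..k}. (x - \<theta> m)\<bar>"
proof -
  define S where "S = {1..k::nat}"
  define W where "W = \<bar>\<Prod>m\<in>S. (x - \<theta> m)\<bar>"
  define Dd where "Dd i = (\<Prod>m\<in>S-{i}. \<bar>\<theta> i - \<theta> m\<bar>)" for i
  define A where "A i = \<bar>\<Prod>m\<in>S-{i}. (x - \<theta> m)/(\<theta> i - \<theta> m)\<bar>" for i
  define f where "f i = (fact (i-1) * fact (k-i) :: real)" for i
  have fpos: "f i > 0" for i unfolding f_def by simp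
  have xpos: "\<bar>x - \<theta> m\<bar> > 0" if "m \<in> S" for m using x that d unfolding S_def by force
  have Wpos: "W > 0" unfolding W_def abs_prod using xpos by (intro prod_pos) auto
  have Dd: "Dd i \<ge> d^(k-1) * f i" if "i \<in> S" for i
    unfolding Dd_def f_def using D_bound[OF d _ sep] that S_def by auto
  have Ddpos: "Dd i > 0" if "i \<in> S" for i
    using Dd[OF that] fpos[of i] d by (smt (verit) mult_pos_pos zero_less_power)
  have Wsplit: "W = \<bar>x - \<theta> i\<bar> * (\<Prod>m\<in>S-{i}. \<bar>x - \<theta> m\<bar>)" if "i \<in> S" for i
    unfolding W_def abs_prod using that S_def by (simp add: prod.remove)
  have Aeq: "A i = W / (\<bar>x - \<theta> i\<bar> * Dd i)" if "i \<in> S" for i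
  proof -
    have "A i = (\<Prod>m\<in>S-{i}. \<bar>x - \<theta> m\<bar>) / Dd i"
      unfolding A_def Dd_def abs_prod by (simp add: prod_dividef)
    also have "\<dots> = W / (\<bar>x - \<theta> i\<bar> * Dd i)"
      using Wsplit[OF that] xpos[OF that] by simp
    finally show ?thesis .
  qed
  have Apos: "A i > 0" if "i \<in> S" for i
    using Aeq[OF that] Wpos xpos[OF that] Ddpos[OF that] by simp
  have Ale: "A i \<le> W * (2 / d^k) * (1 / f i)" if "i \<in> S" for i
  proof -
    have kk: "d^k = d * d^(k-1)" using k by (metis One_nat_def Suc_pred less_le_trans pos2 power_Suc zero_less_Suc)
    have "d^k * f i / 2 = (d/2) * (d^(k-1) * f i)" by (simp add: kk)
    also have "\<dots> \<le> \<bar>x - \<theta> i\<bar> * Dd i"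
      by (rule mult_mono) (use x that S_def Dd[OF that] d fpos[of i] in auto)
    finally have den: "d^k * f i / 2 \<le> \<bar>x - \<theta> i\<bar> * Dd i" .
    have "A i = W / (\<bar>x - \<theta> i\<bar> * Dd i)" by (rule Aeq[OF that])
    also have "\<dots> \<le> W / (d^k * f i / 2)"
      by (rule divide_left_mono[OF den]) (use Wpos d fpos[of i] xpos[OF that] Ddpos[OF that] in auto)
    also have "\<dots> = W * (2 / d^k) * (1 / f i)" by simp
    finally show ?thesis .
  qed
  have Sne: "S \<noteq> {}" using k S_def by auto
  have "\<bar>\<Sum>i\<in>S. c i * (\<Prod>m\<in>S-{i}. (x - \<theta> m)/(\<theta> i - \<theta> m))\<bar> \<le> (\<Sum>i\<in>S. \<bar>c i\<bar> * A i)"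
    unfolding A_def by (rule order.trans[OF sum_abs]) (simp add: abs_mult)
  also have "\<dots> < (\<Sum>i\<in>S. \<epsilon> * A i)"
    by (rule sum_strict_mono) (use Sne c Apos S_def in auto)
  also have "\<dots> \<le> (\<Sum>i\<in>S. \<epsilon> * (W * (2 / d^k) * (1 / f i)))"
  proof (rule sum_mono)
    fix i assume i: "i \<in> S"
    have "\<epsilon> \<ge> 0" using c i S_def by (meson abs_ge_zero le_less_trans less_imp_le)
    then show "\<epsilon> * A i \<le> \<epsilon> * (W * (2 / d^k) * (1 / f i))"
      using Ale[OF i] by (rule mult_left_mono[rotated])
  qed
  also have "\<dots> = \<epsilon> * W * (2 / d^k) * (\<Sum>i\<in>S. 1 / f i)"
    by (simp add: sum_distrib_left mult.assoc)
  also have "(\<Sum>i\<in>S. 1 / f i) = 2^(k-1) / fact (k-1)"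
    unfolding S_def f_def using k by (intro sum_inv_fact) auto
  also have "\<epsilon> * W * (2 / d^k) * (2^(k-1) / fact (k-1)) = W * ((\<epsilon> * 2^k) / (fact (k-1) * d^k))"
  proof -
    have "(2::real) * 2^(k-1) = 2^k" using k by (metis Suc_diff_1 less_le_trans pos2 power_Suc)
    then show ?thesis by (simp add: field_simps)
  qed
  also have "\<dots> \<le> W * 1"
    by (rule mult_left_mono) (use e d Wpos in \<open>auto simp: divide_le_eq\<close>)
  finally show ?thesis unfolding S_def W_def by simp
qed



lemma root_in_ball:
  fixes \<theta> \<theta>h :: "nat \<Rightarrow> real"
  assumes k: "k \<ge> 2" and d: "d > 0"
    and sep: "\<forall>i\<in>{1..k}. \<forall>m\<in>{1..k}. \<bar>\<theta> i - \<theta> m\<bar> \<ge> real (dst i m) * d"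
    and gap: "\<forall>i\<in>{1..k}. \<forall>m\<in>{1..k}. i \<noteq> m \<longrightarrow> \<bar>\<theta> i - \<theta> m\<bar> \<ge> d"
    and P: "\<forall>i\<in>{1..k}. \<bar>\<Prod>l\<in>{1..k}. \<theta> i - \<theta>h l\<bar> < \<epsilon>"
    and e: "\<epsilon> * 2^k \<le> fact (k-1) * d^k"
    and j: "j \<in> {1..k}"
  shows "\<exists>l\<in>{1..k}. \<bar>\<theta>h l - \<theta> j\<bar> < d/2"
proof -
  define S where "S = {1..k::nat}"
  define p where "p x = (\<Prod>l\<in>S. x - \<theta>h l)" for x
  define w where "w x = (\<Prod>m\<in>S. x - \<theta> m)" for x
  define Lf where "Lf x = (\<Sum>i\<in>S. (\<Prod>l\<in>S. \<theta> i - \<theta>h l) * (\<Prod>m\<in>S-{i}. (x - \<theta> m) / (\<theta> i - \<theta> m)))" for x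
  have inj: "inj_on \<theta> S"
    unfolding inj_on_def S_def using gap d by force
  have Sne: "S \<noteq> {}" using k S_def by auto
  have pid: "p x = w x + Lf x" for x
    unfolding p_def w_def Lf_def by (rule lagrange_id) (use inj Sne S_def in auto)
  have key: "p y * w y > 0" if y: "\<forall>m\<in>S. \<bar>y - \<theta> m\<bar> \<ge> d/2" for y
  proof -
    have Lb: "\<bar>Lf y\<bar> < \<bar>w y\<bar>"
      unfolding Lf_def w_def S_def
      by (rule L_bound[OF k d sep _ _ e]) (use y P S_def in auto)
    have "\<bar>Lf y * w y\<bar> < w y * w y"
    proof -
      have "\<bar>Lf y\<bar> * \<bar>w y\<bar> < \<bar>w y\<bar> * \<bar>w y\<bar>" using Lb by (intro mult_strict_right_mono) auto
      then show ?thesis by (simp add: abs_mult)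
    qed
    then show ?thesis unfolding pid by (simp add: algebra_simps)
  qed
  define a where "a = \<theta> j - d/2"
  define b where "b = \<theta> j + d/2"
  have ya: "\<forall>m\<in>S. \<bar>a - \<theta> m\<bar> \<ge> d/2"
  proof
    fix m assume m: "m \<in> S"
    show "\<bar>a - \<theta> m\<bar> \<ge> d/2"
    proof (cases "m = j")
      case True then show ?thesis unfolding a_def using d by simp
    next
      case False then have "\<bar>\<theta> j - \<theta> m\<bar> \<ge> d" using gap m j S_def by auto
      then show ?thesis unfolding a_def by linarith
    qed
  qed
  have yb: "\<forall>m\<in>S. \<bar>b - \<theta> m\<bar> \<ge> d/2"
  proof
    fix m assume m: "m \<in> S"
    show "\<bar>b - \<theta> m\<bar> \<ge> d/2"
    proof (cases "m = j")
      case True then show ?thesis unfolding b_def using d by simp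
    next
      case False then have "\<bar>\<theta> j - \<theta> m\<bar> \<ge> d" using gap m j S_def by auto
      then show ?thesis unfolding b_def by linarith
    qed
  qed
  have wab: "w a * w b < 0"
  proof -
    have "w a * w b = (\<Prod>m\<in>S. (a - \<theta> m) * (b - \<theta> m))"
      unfolding w_def by (simp add: prod.distrib)
    also have "\<dots> = ((a - \<theta> j) * (b - \<theta> j)) * (\<Prod>m\<in>S-{j}. (a - \<theta> m) * (b - \<theta> m))"
      using j S_def by (simp add: prod.remove)
    also have "\<dots> < 0"
    proof (rule mult_neg_pos)
      show "(a - \<theta> j) * (b - \<theta> j) < 0" unfolding a_def b_def using d by (simp add: mult_neg_pos)
      show "0 < (\<Prod>m\<in>S-{j}. (a - \<theta> m) * (b - \<theta> m))"
      proof (rule prod_pos)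
        fix m assume m: "m \<in> S - {j}"
        then have g: "\<bar>\<theta> j - \<theta> m\<bar> \<ge> d" using gap j S_def by auto
        have "(a - \<theta> m) * (b - \<theta> m) = (\<theta> j - \<theta> m)^2 - d^2/4"
          unfolding a_def b_def by (simp add: power2_eq_square algebra_simps)
        moreover have "(\<theta> j - \<theta> m)^2 \<ge> d^2"
          using g d by (metis abs_ge_zero less_imp_le power2_abs power_mono)
        moreover have "d^2 > 0" using d by simp
        ultimately show "0 < (a - \<theta> m) * (b - \<theta> m)" by linarith
      qed
    qed
    finally show ?thesis .
  qed
  have pa: "p a * w a > 0" by (rule key[OF ya])
  have pb: "p b * w b > 0" by (rule key[OF yb])
  have pab: "p a * p b < 0"
  proof -
    have h: "(p a * p b) * (w a * w b) > 0" using mult_pos_pos[OF pa pb] by (simp add: algebra_simps)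
    show ?thesis
    proof (rule ccontr)
      assume "\<not> p a * p b < 0"
      then have "p a * p b \<ge> 0" by simp
      then have "(p a * p b) * (w a * w b) \<le> 0" using wab by (intro mult_nonneg_nonpos[of "p a * p b" "w a * w b"]) auto
      with h show False by simp
    qed
  qed
  have cont: "continuous_on {a..b} p" unfolding p_def by (intro continuous_intros)
  have ab: "a \<le> b" unfolding a_def b_def using d by simp
  obtain x where x: "a \<le> x" "x \<le> b" "p x = 0"
  proof (cases "p a < 0")
    case True
    then have "p b > 0" using pab by (simp add: mult_less_0_iff)
    then show ?thesis using IVT'[of p a 0 b] True cont ab that by auto
  next
    case False
    then have "p a > 0" "p b < 0" using pab by (auto simp: mult_less_0_iff)
    then show ?thesis using IVT2'[of p b 0 a] cont ab that by auto
  qed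
  have "x \<noteq> a" "x \<noteq> b" using x pab by auto
  then have "a < x" "x < b" using x by auto
  then have xl: "\<bar>x - \<theta> j\<bar> < d/2" unfolding a_def b_def abs_less_iff by linarith
  from x(3) obtain l where l: "l \<in> S" "x - \<theta>h l = 0" unfolding p_def using S_def by (auto simp: prod_zero_iff)
  then show ?thesis using xl S_def by auto
qed



lemma spread:
  fixes \<theta> :: "nat \<Rightarrow> real"
  assumes mono: "\<forall>i j. 1 \<le> i \<and> i < j \<and> j \<le> k \<longrightarrow> \<theta> i < \<theta> j"
    and gap: "\<forall>i\<in>{1..k}. \<forall>m\<in>{1..k}. i \<noteq> m \<longrightarrow> \<bar>\<theta> i - \<theta> m\<bar> \<ge> d"
    and i: "1 \<le> i"
  shows "i + n \<le> k \<Longrightarrow> \<theta> (i+n) - \<theta> i \<ge> real n * d"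
proof (induction n)
  case 0 then show ?case by simp
next
  case (Suc n)
  have IH: "\<theta> (i+n) - \<theta> i \<ge> real n * d" using Suc by simp
  have lt: "\<theta> (i+n) < \<theta> (i + Suc n)" using mono Suc.prems i by auto
  have "\<bar>\<theta> (i + Suc n) - \<theta> (i+n)\<bar> \<ge> d" using gap Suc.prems i by auto
  then have "\<theta> (i + Suc n) - \<theta> (i+n) \<ge> d" using lt by simp
  then show ?case using IH by (simp add: algebra_simps)
qed

lemma sep_from:
  fixes \<theta> :: "nat \<Rightarrow> real"
  assumes mono: "\<forall>i j. 1 \<le> i \<and> i < j \<and> j \<le> k \<longrightarrow> \<theta> i < \<theta> j"
    and gap: "\<forall>i\<in>{1..k}. \<forall>m\<in>{1..k}. i \<noteq> m \<longrightarrow> \<bar>\<theta> i - \<theta> m\<bar> \<ge> d"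
  shows "\<forall>i\<in>{1..k}. \<forall>m\<in>{1..k}. \<bar>\<theta> i - \<theta> m\<bar> \<ge> real (dst i m) * d"
proof (intro ballI)
  fix i m assume i: "i \<in> {1..k}" and m: "m \<in> {1..k}"
  show "\<bar>\<theta> i - \<theta> m\<bar> \<ge> real (dst i m) * d"
  proof (cases "m < i")
    case True
    have "\<theta> (m + (i - m)) - \<theta> m \<ge> real (i - m) * d"
      by (rule spread[OF mono gap]) (use i m True in auto)
    then show ?thesis using True unfolding dst_def by auto
  next
    case False
    have "\<theta> (i + (m - i)) - \<theta> i \<ge> real (m - i) * d"
      by (rule spread[OF mono gap]) (use i m False in auto)
    then show ?thesis using False unfolding dst_def by auto
  qed
qed

theorem lemma3p7:
  fixes k :: nat and \<theta> \<theta>h :: "nat \<Rightarrow> real" and \<epsilon> :: real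
  assumes "k \<ge> 2"
    and "\<forall>j\<in>{1..k}. - (pi/2) \<le> \<theta> j \<and> \<theta> j \<le> pi/2"
    and "\<forall>i j. 1 \<le> i \<and> i < j \<and> j \<le> k \<longrightarrow> \<theta> i < \<theta> j"
    and "\<forall>j\<in>{1..k}. - (pi/2) \<le> \<theta>h j \<and> \<theta>h j \<le> pi/2"
    and "\<epsilon> > 0"
    and "infnorm_vec k (eta k k (\<lambda>j. complex_of_real (\<theta> j)) (\<lambda>j. complex_of_real (\<theta>h j))) < \<epsilon>"
    and "theta_min k \<theta> \<ge> root k (4 * \<epsilon> / lam k)"
  shows "\<exists>\<sigma>. \<sigma> permutes {1..k} \<and>
           (\<forall>j\<in>{1..k}. \<bar>\<theta>h (\<sigma> j) - \<theta> j\<bar> < theta_min k \<theta> / 2 \<and>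
              \<bar>\<theta>h (\<sigma> j) - \<theta> j\<bar> \<le> 2^(k-1) * \<epsilon> / (fact (k-2) * theta_min k \<theta> ^ (k-1)))"
proof -
  note k = assms(1) and mono = assms(3) and epos = assms(5) and norm = assms(6) and rt = assms(7)
  define S where "S = {1..k}"
  define d where "d = theta_min k \<theta>"
  define T where "T = {\<bar>\<theta> q - \<theta> j\<bar> | q j. q \<in> {1..k} \<and> j \<in> {1..k} \<and> q \<noteq> j}"
  have dT: "d = Min T" unfolding d_def T_def theta_min_def by simp
  have Tfin: "finite T"
  proof -
    have "T \<subseteq> (\<lambda>(q,j). \<bar>\<theta> q - \<theta> j\<bar>) ` ({1..k} \<times> {1..k})" unfolding T_def by auto
    then show ?thesis by (rule finite_subset) auto
  qed
  have "\<bar>\<theta> 1 - \<theta> 2\<bar> \<in> T" unfolding T_def using k by (intro CollectI exI[of _ 1] exI[of _ 2]) auto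
  then have Tne: "T \<noteq> {}" by auto
  have gap: "\<forall>i\<in>{1..k}. \<forall>m\<in>{1..k}. i \<noteq> m \<longrightarrow> \<bar>\<theta> i - \<theta> m\<bar> \<ge> d"
  proof (intro ballI impI)
    fix i m assume im: "i \<in> {1..k}" "m \<in> {1..k}" "i \<noteq> m"
    then have "\<bar>\<theta> i - \<theta> m\<bar> \<in> T" unfolding T_def by blast
    then show "\<bar>\<theta> i - \<theta> m\<bar> \<ge> d" unfolding dT using Tfin by (intro Min_le)
  qed
  have dpos: "d > 0"
  proof -
    have "d \<in> T" unfolding dT using Tfin Tne by (rule Min_in)
    then obtain q j where qj: "q \<in> {1..k}" "j \<in> {1..k}" "q \<noteq> j" "d = \<bar>\<theta> q - \<theta> j\<bar>" unfolding T_def by auto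
    have "\<theta> q \<noteq> \<theta> j"
    proof (cases "q < j")
      case True then show ?thesis using mono qj by force
    next
      case False then have "j < q" using qj by auto
      then show ?thesis using mono qj by force
    qed
    then show ?thesis using qj by simp
  qed
  have sep: "\<forall>i\<in>{1..k}. \<forall>m\<in>{1..k}. \<bar>\<theta> i - \<theta> m\<bar> \<ge> real (dst i m) * d"
    by (rule sep_from[OF mono gap])
  have P: "\<forall>i\<in>{1..k}. \<bar>\<Prod>l\<in>{1..k}. \<theta> i - \<theta>h l\<bar> < \<epsilon>"
  proof
    fix i assume i: "i \<in> {1..k}"
    have ne: "{1..k} \<noteq> {}" using k by auto
    have "Max ((\<lambda>j. \<bar>eta k k (\<lambda>j. complex_of_real (\<theta> j)) (\<lambda>j. complex_of_real (\<theta>h j)) j\<bar>) ` {1..k}) < \<epsilon>"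
      using norm unfolding infnorm_vec_def .
    then have "\<bar>eta k k (\<lambda>j. complex_of_real (\<theta> j)) (\<lambda>j. complex_of_real (\<theta>h j)) i\<bar> < \<epsilon>"
      using i ne by (subst (asm) Max_less_iff) auto
    moreover have "eta k k (\<lambda>j. complex_of_real (\<theta> j)) (\<lambda>j. complex_of_real (\<theta>h j)) i = \<bar>\<Prod>l\<in>{1..k}. \<theta> i - \<theta>h l\<bar>"
      unfolding eta_def abs_prod by (intro prod.cong refl) (simp flip: of_real_diff)
    ultimately show "\<bar>\<Prod>l\<in>{1..k}. \<theta> i - \<theta>h l\<bar> < \<epsilon>" by simp
  qed
  have e: "\<epsilon> * 2^k \<le> fact (k-1) * d^k"
  proof -
    have lp: "lam k > 0" by (rule lam_pos)
    have y: "4 * \<epsilon> / lam k \<ge> 0" using epos lp by simp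
    have "4 * \<epsilon> / lam k = root k (4 * \<epsilon> / lam k) ^ k"
      using k y by (simp add: real_root_pow_pos2)
    also have "\<dots> \<le> d^k"
      using rt y k unfolding d_def by (intro power_mono) auto
    finally have "4 * \<epsilon> / lam k \<le> d^k" .
    then have e1: "4 * \<epsilon> \<le> lam k * d^k" using lp by (simp add: divide_le_eq mult.commute)
    have "4 * (\<epsilon> * 2^k) = (4 * \<epsilon>) * 2^k" by simp
    also have "\<dots> \<le> (lam k * d^k) * 2^k" using e1 by (intro mult_right_mono) auto
    also have "\<dots> = (lam k * 2^k) * d^k" by simp
    also have "\<dots> \<le> (4 * fact (k-1)) * d^k"
      using lam_bound[OF k] dpos by (intro mult_right_mono) auto
    finally show ?thesis by simp
  qed
  have ex: "\<forall>j\<in>S. \<exists>l\<in>S. \<bar>\<theta>h l - \<theta> j\<bar> < d/2"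
    unfolding S_def using root_in_ball[OF k dpos sep gap P e] by blast
  then obtain g where g: "\<forall>j\<in>S. g j \<in> S \<and> \<bar>\<theta>h (g j) - \<theta> j\<bar> < d/2"
    by metis
  have ginj: "inj_on g S"
  proof (rule inj_onI)
    fix i j assume ij: "i \<in> S" "j \<in> S" "g i = g j"
    show "i = j"
    proof (rule ccontr)
      assume "i \<noteq> j"
      then have "\<bar>\<theta> i - \<theta> j\<bar> \<ge> d" using gap ij S_def by auto
      moreover have "\<bar>\<theta>h (g i) - \<theta> i\<bar> < d/2" "\<bar>\<theta>h (g j) - \<theta> j\<bar> < d/2" using g ij by auto
      moreover have "\<bar>\<theta> i - \<theta> j\<bar> \<le> \<bar>\<theta> i - \<theta>h (g j)\<bar> + \<bar>\<theta>h (g j) - \<theta> j\<bar>"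
        using abs_triangle_ineq[of "\<theta> i - \<theta>h (g j)" "\<theta>h (g j) - \<theta> j"] by simp
      moreover have "\<bar>\<theta> i - \<theta>h (g j)\<bar> = \<bar>\<theta>h (g i) - \<theta> i\<bar>" using ij(3) by (simp add: abs_minus_commute)
      ultimately show False by linarith
    qed
  qed
  have gS: "g ` S = S"
    by (rule endo_inj_surj) (use g ginj S_def in auto)
  define \<sigma> where "\<sigma> x = (if x \<in> S then g x else x)" for x
  have sinj: "inj_on \<sigma> S" using ginj unfolding \<sigma>_def inj_on_def by auto
  have sS: "\<sigma> ` S = S" using gS unfolding \<sigma>_def by (auto simp: image_def)
  have bij: "bij_betw \<sigma> S S" using sinj sS by (simp add: bij_betw_def)
  have perm: "\<sigma> permutes S"
    by (rule bij_imp_permutes[OF bij]) (simp add: \<sigma>_def)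
  have close: "\<bar>\<theta>h (\<sigma> j) - \<theta> j\<bar> < d/2" if "j \<in> S" for j
    using g that unfolding \<sigma>_def by auto
  have bound: "\<bar>\<theta>h (\<sigma> j) - \<theta> j\<bar> \<le> 2^(k-1) * \<epsilon> / (fact (k-2) * d ^ (k-1))" if j: "j \<in> S" for j
  proof -
    define \<delta> where "\<delta> = \<bar>\<theta>h (\<sigma> j) - \<theta> j\<bar>"
    have "(\<Prod>l\<in>S. \<bar>\<theta> j - \<theta>h l\<bar>) = (\<Prod>m\<in>S. \<bar>\<theta> j - \<theta>h (\<sigma> m)\<bar>)"
      using prod.reindex_bij_betw[OF bij, of "\<lambda>l. \<bar>\<theta> j - \<theta>h l\<bar>"] by simp
    also have "\<dots> = \<bar>\<theta> j - \<theta>h (\<sigma> j)\<bar> * (\<Prod>m\<in>S-{j}. \<bar>\<theta> j - \<theta>h (\<sigma> m)\<bar>)"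
      using j S_def by (simp add: prod.remove)
    also have "\<bar>\<theta> j - \<theta>h (\<sigma> j)\<bar> = \<delta>" unfolding \<delta>_def by simp
    finally have Pj: "(\<Prod>l\<in>S. \<bar>\<theta> j - \<theta>h l\<bar>) = \<delta> * (\<Prod>m\<in>S-{j}. \<bar>\<theta> j - \<theta>h (\<sigma> m)\<bar>)" .
    have fac: "(\<Prod>m\<in>S-{j}. (2 * real (dst j m) - 1) * (d/2)) \<le> (\<Prod>m\<in>S-{j}. \<bar>\<theta> j - \<theta>h (\<sigma> m)\<bar>)"
    proof (rule prod_mono)
      fix m assume m: "m \<in> S - {j}"
      have dst1: "dst j m \<ge> 1" using m unfolding dst_def by auto
      have "\<bar>\<theta> j - \<theta> m\<bar> \<ge> real (dst j m) * d" using sep j m S_def by auto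
      moreover have "\<bar>\<theta>h (\<sigma> m) - \<theta> m\<bar> < d/2" using close m by auto
      ultimately have "\<bar>\<theta> j - \<theta>h (\<sigma> m)\<bar> \<ge> real (dst j m) * d - d/2" by linarith
      moreover have "real (dst j m) * d - d/2 = (2 * real (dst j m) - 1) * (d/2)" by (simp add: algebra_simps)
      moreover have "0 \<le> (2 * real (dst j m) - 1) * (d/2)" using dst1 dpos by simp
      ultimately show "0 \<le> (2 * real (dst j m) - 1) * (d/2) \<and> (2 * real (dst j m) - 1) * (d/2) \<le> \<bar>\<theta> j - \<theta>h (\<sigma> m)\<bar>"
        by simp
    qed
    have jk: "j \<in> {1..k}" using j S_def by simp
    have "(\<Prod>m\<in>S-{j}. (2 * real (dst j m) - 1) * (d/2)) = (\<Prod>m\<in>S-{j}. 2 * real (dst j m) - 1) * (d/2)^(k-1)"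
    proof -
      have "(\<Prod>m\<in>S-{j}. (2 * real (dst j m) - 1) * (d/2)) = (\<Prod>m\<in>S-{j}. 2 * real (dst j m) - 1) * (\<Prod>m\<in>S-{j}. d/2)"
        by (rule prod.distrib)
      also have "(\<Prod>m\<in>S-{j}. d/2) = (d/2)^(k-1)" using jk S_def by simp
      finally show ?thesis .
    qed
    also have "(\<Prod>m\<in>S-{j}. 2 * real (dst j m) - 1) = (\<Prod>t=1..j-1. 2 * real t - 1) * (\<Prod>t=1..k-j. 2 * real t - 1)"
      using prod_dist_split[OF jk, of "\<lambda>t. 2 * real t - 1"] unfolding S_def dst_def by simp
    finally have eqf: "(\<Prod>m\<in>S-{j}. (2 * real (dst j m) - 1) * (d/2)) = (\<Prod>t=1..j-1. 2 * real t - 1) * (\<Prod>t=1..k-j. 2 * real t - 1) * (d/2)^(k-1)" .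
    have of: "fact (k-2) \<le> (\<Prod>t=1..j-1. 2 * real t - 1) * (\<Prod>t=1..k-j. 2 * real t - 1)"
      by (rule odd_prod_ge) (use jk k in auto)
    define X where "X = fact (k-2) * (d/2)^(k-1)"
    have Xpos: "X > 0" unfolding X_def using dpos by simp
    have "X \<le> (\<Prod>m\<in>S-{j}. \<bar>\<theta> j - \<theta>h (\<sigma> m)\<bar>)"
      unfolding X_def using fac eqf of dpos by (smt (verit) mult_right_mono zero_le_power zero_le_divide_iff)
    then have "\<delta> * X \<le> \<delta> * (\<Prod>m\<in>S-{j}. \<bar>\<theta> j - \<theta>h (\<sigma> m)\<bar>)" unfolding \<delta>_def by (intro mult_left_mono) auto
    also have "\<dots> < \<epsilon>"
    proof -
      have "(\<Prod>l\<in>S. \<bar>\<theta> j - \<theta>h l\<bar>) < \<epsilon>" using P jk unfolding S_def abs_prod by blast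
      then show ?thesis using Pj by simp
    qed
    finally have "\<delta> \<le> \<epsilon> / X" using Xpos by (simp add: pos_le_divide_eq less_imp_le)
    also have "\<epsilon> / X = 2^(k-1) * \<epsilon> / (fact (k-2) * d ^ (k-1))"
      unfolding X_def by (simp add: power_divide)
    finally show ?thesis unfolding \<delta>_def .
  qed
  show ?thesis
    using perm close bound unfolding S_def d_def by (intro exI[of _ \<sigma>]) auto
qed


end
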